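(* Let $X$ be a real-valued light-tailed random variable with $0<E(X)<\infty$, let $(X_i)_{i\ge1}$ be IID with the law of $X$, let $N$ be a heavy-tailed random variable with values in $\{1,2,3,\dots\}$ independent of $(X_i)$ with $E(N^{1+\delta})<\infty$ for some $\delta>0$, and put $S_N=\sum_{k=1}^N X_k$. If $h$ is a natural scale of $E(X)N$ with $h(x)\ge(1+\delta)\log x$ for all large $x$, then $h$ is a natural scale of $S_N$.
   Context: $R_Y(x):=-\log P(Y>x)$. $Y$ is heavy-tailed if $E(e^{sY})=\infty$ for all $s>0$, light-tailed otherwise. A natural scale of a heavy-tailed $Y$ is a concave $h:[0,\infty)\to[0,\infty)$ with $h(0)=0$, $h(x)\to\infty$, and $\liminf_{x\to\infty}R_Y(x)/h(x)=1$. *)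

theory Defs
  imports "HOL-Probability.Probability"
begin

definition tail_exponent :: "'a measure \<Rightarrow> ('a \<Rightarrow> real) \<Rightarrow> real \<Rightarrow> real" where
  "tail_exponent M Y x = - ln (measure M {\<omega> \<in> space M. Y \<omega> > x})"

definition heavy_tailed :: "'a measure \<Rightarrow> ('a \<Rightarrow> real) \<Rightarrow> bool" where
  "heavy_tailed M Y \<longleftrightarrow> (\<forall>s>0. (\<integral>\<^sup>+ \<omega>. ennreal (exp (s * Y \<omega>)) \<partial>M) = \<infinity>)"

definition light_tailed :: "'a measure \<Rightarrow> ('a \<Rightarrow> real) \<Rightarrow> bool" where
  "light_tailed M Y \<longleftrightarrow> \<not> heavy_tailed M Y"

definition natural_scale :: "'a measure \<Rightarrow> ('a \<Rightarrow> real) \<Rightarrow> (real \<Rightarrow> real) \<Rightarrow> bool" where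
  "natural_scale M Y h \<longleftrightarrow>
     heavy_tailed M Y \<and>
     concave_on {0..} h \<and> h 0 = 0 \<and> (\<forall>x\<ge>0. h x \<ge> 0) \<and>
     filterlim h at_top at_top \<and>
     Liminf at_top (\<lambda>x. ereal (tail_exponent M Y x / h x)) = 1"

end

theory Submission
  imports Defs
begin


lemma liminf_lower:
  fixes f :: "real \<Rightarrow> real"
  assumes "Liminf at_top (\<lambda>x. ereal (f x)) = 1" "\<epsilon> > 0"
  shows "eventually (\<lambda>x. f x > 1 - \<epsilon>) at_top"
proof -
  have "ereal 1 \<le> Liminf at_top (\<lambda>x. ereal (f x))" using assms(1) by simp
  then have all: "\<forall>y<ereal 1. eventually (\<lambda>x. y < ereal (f x)) at_top"
    by (simp only: le_Liminf_iff)
  have "ereal (1 - \<epsilon>) < ereal 1" using assms(2) by simp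
  from all[rule_format, OF this] show ?thesis by simp
qed

lemma liminf_upper:
  fixes f :: "real \<Rightarrow> real"
  assumes "Liminf at_top (\<lambda>x. ereal (f x)) = 1" "\<epsilon> > 0"
  shows "\<exists>x\<ge>K. f x < 1 + \<epsilon>"
proof (rule ccontr)
  assume "\<not> (\<exists>x\<ge>K. f x < 1 + \<epsilon>)"
  then have ev: "eventually (\<lambda>x. f x \<ge> 1 + \<epsilon>) at_top"
    unfolding eventually_at_top_linorder by (auto simp: not_less)
  have "ereal (1 + \<epsilon>) \<le> Liminf at_top (\<lambda>x. ereal (f x))"
    unfolding le_Liminf_iff
  proof (intro allI impI)
    fix y assume "y < ereal (1 + \<epsilon>)"
    show "eventually (\<lambda>x. y < ereal (f x)) at_top"
    proof (rule eventually_mono[OF ev])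
      fix x assume "1 + \<epsilon> \<le> f x"
      then have "ereal (1 + \<epsilon>) \<le> ereal (f x)" by simp
      then show "y < ereal (f x)" using \<open>y < ereal (1 + \<epsilon>)\<close> by (rule less_le_trans[rotated])
    qed
  qed
  then show False using assms by simp
qed

lemma liminf_intro:
  fixes f :: "real \<Rightarrow> real"
  assumes L: "\<And>\<epsilon>. \<epsilon> > 0 \<Longrightarrow> eventually (\<lambda>x. f x > 1 - \<epsilon>) at_top"
    and U: "\<And>\<epsilon> K. \<epsilon> > 0 \<Longrightarrow> \<exists>x\<ge>K. f x < 1 + \<epsilon>"
  shows "Liminf at_top (\<lambda>x. ereal (f x)) = 1"
proof (rule antisym)
  show "1 \<le> Liminf at_top (\<lambda>x. ereal (f x))"
    unfolding le_Liminf_iff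
  proof (intro allI impI)
    fix y :: ereal assume y: "y < 1"
    show "eventually (\<lambda>x. y < ereal (f x)) at_top"
    proof (cases y)
      case (real r)
      then have "r < 1" using y by simp
      then have "eventually (\<lambda>x. f x > 1 - (1 - r)) at_top" by (intro L) simp
      then show ?thesis using real by (elim eventually_mono) simp
    next
      case PInf then show ?thesis using y by simp
    next
      case MInf then show ?thesis by simp
    qed
  qed
  show "Liminf at_top (\<lambda>x. ereal (f x)) \<le> 1"
  proof (rule ccontr)
    assume "\<not> Liminf at_top (\<lambda>x. ereal (f x)) \<le> 1"
    then have "1 < Liminf at_top (\<lambda>x. ereal (f x))" by simp
    then obtain r where r: "1 < ereal r" "ereal r < Liminf at_top (\<lambda>x. ereal (f x))"
      using ereal_dense2 by blast
    then have "ereal r \<le> Liminf at_top (\<lambda>x. ereal (f x))" by simp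
    then have all: "\<forall>y<ereal r. eventually (\<lambda>x. y < ereal (f x)) at_top"
      by (simp only: le_Liminf_iff)
    have "ereal ((1 + r) / 2) < ereal r" using r(1) by simp
    from all[rule_format, OF this]
    have "eventually (\<lambda>x. ereal ((1 + r) / 2) < ereal (f x)) at_top" .
    then obtain K where K: "\<And>x. x \<ge> K \<Longrightarrow> (1 + r) / 2 < f x"
      unfolding eventually_at_top_linorder by auto
    obtain x where "x \<ge> K" "f x < 1 + (r - 1) / 2" using U[of "(r - 1) / 2" K] r(1) by auto
    with K[of x] show False by (simp add: field_simps)
  qed
qed

locale thm_setting = prob_space M
  for M :: "'a measure" +
  fixes X :: "'a \<Rightarrow> real" and Xs :: "nat \<Rightarrow> 'a \<Rightarrow> real"
    and N :: "'a \<Rightarrow> nat" and \<delta> :: real and h :: "real \<Rightarrow> real"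
  assumes X_meas[measurable]: "X \<in> borel_measurable M"
    and light: "light_tailed M X"
    and X_int: "integrable M X" and mu_pos: "expectation X > 0"
    and Xs_meas: "\<And>i. i \<ge> 1 \<Longrightarrow> Xs i \<in> borel_measurable M"
    and Xs_distr: "\<And>i. i \<ge> 1 \<Longrightarrow> distr M borel (Xs i) = distr M borel X"
    and Xs_indep: "indep_vars (\<lambda>_. borel) Xs {1..}"
    and N_meas[measurable]: "N \<in> measurable M (count_space UNIV)"
    and N_ge1: "\<And>\<omega>. \<omega> \<in> space M \<Longrightarrow> N \<omega> \<ge> 1"
    and N_heavy: "heavy_tailed M (\<lambda>\<omega>. real (N \<omega>))"
    and N_indep: "indep_set
           (sigma_sets (space M) {N -` A \<inter> space M | A. A \<in> sets (count_space UNIV)})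
           (sigma_sets (space M) (\<Union>i\<in>{1..}. {Xs i -` A \<inter> space M | A. A \<in> sets borel}))"
    and delta_pos: "\<delta> > 0"
    and N_mom: "(\<integral>\<^sup>+ \<omega>. ennreal (real (N \<omega>) powr (1 + \<delta>)) \<partial>M) < \<infinity>"
    and h_scale: "natural_scale M (\<lambda>\<omega>. expectation X * real (N \<omega>)) h"
    and h_log: "\<forall>\<^sub>F x in at_top. h x \<ge> (1 + \<delta>) * ln x"
begin

definition "mu = expectation X"
definition "T n \<omega> = (\<Sum>k\<in>{1..n}. Xs k \<omega>)"
definition "S \<omega> = (\<Sum>k\<in>{1..N \<omega>}. Xs k \<omega>)"

lemma T_meas[measurable]: "T n \<in> borel_measurable M"
  unfolding T_def by (intro borel_measurable_sum) (auto intro: Xs_meas)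

lemma S_eq: "S \<omega> = T (N \<omega>) \<omega>" by (simp add: S_def T_def)

lemma S_meas[measurable]: "S \<in> borel_measurable M"
proof -
  have "(\<lambda>\<omega>. T (N \<omega>) \<omega>) \<in> borel_measurable M"
    by (rule measurable_compose_countable[OF T_meas N_meas])
  then show ?thesis by (simp add: S_eq[abs_def])
qed

lemma mu_pos': "mu > 0" using mu_pos by (simp add: mu_def)

lemma Xs_integral:
  fixes g :: "real \<Rightarrow> real"
  assumes "i \<ge> 1" "g \<in> borel_measurable borel"
  shows "(\<integral>\<omega>. g (Xs i \<omega>) \<partial>M) = (\<integral>\<omega>. g (X \<omega>) \<partial>M)"
proof -
  have "(\<integral>\<omega>. g (Xs i \<omega>) \<partial>M) = integral\<^sup>L (distr M borel (Xs i)) g"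
    using integral_distr[OF Xs_meas[OF assms(1)] assms(2)] by simp
  also have "\<dots> = integral\<^sup>L (distr M borel X) g" using Xs_distr[OF assms(1)] by simp
  also have "\<dots> = (\<integral>\<omega>. g (X \<omega>) \<partial>M)"
    using integral_distr[OF X_meas assms(2)] by simp
  finally show ?thesis .
qed

lemma Xs_integrable:
  fixes g :: "real \<Rightarrow> real"
  assumes "i \<ge> 1" "g \<in> borel_measurable borel"
  shows "integrable M (\<lambda>\<omega>. g (Xs i \<omega>)) \<longleftrightarrow> integrable M (\<lambda>\<omega>. g (X \<omega>))"
proof -
  have "integrable M (\<lambda>\<omega>. g (Xs i \<omega>)) \<longleftrightarrow> integrable (distr M borel (Xs i)) g"
    using integrable_distr_eq[OF Xs_meas[OF assms(1)] assms(2)] by simp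
  also have "\<dots> \<longleftrightarrow> integrable (distr M borel X) g" using Xs_distr[OF assms(1)] by simp
  also have "\<dots> \<longleftrightarrow> integrable M (\<lambda>\<omega>. g (X \<omega>))"
    using integrable_distr_eq[OF X_meas assms(2)] by simp
  finally show ?thesis .
qed

lemma Xs_nn_integral:
  assumes "i \<ge> 1" "g \<in> borel_measurable borel"
  shows "(\<integral>\<^sup>+\<omega>. g (Xs i \<omega>) \<partial>M) = (\<integral>\<^sup>+\<omega>. g (X \<omega>) \<partial>M)"
proof -
  have "(\<integral>\<^sup>+\<omega>. g (Xs i \<omega>) \<partial>M) = integral\<^sup>N (distr M borel (Xs i)) g"
    by (rule nn_integral_distr[symmetric]) (use assms Xs_meas in auto)
  also have "\<dots> = integral\<^sup>N (distr M borel X) g" using Xs_distr[OF assms(1)] by simp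
  also have "\<dots> = (\<integral>\<^sup>+\<omega>. g (X \<omega>) \<partial>M)"
    by (rule nn_integral_distr) (use assms in auto)
  finally show ?thesis .
qed

lemma Xs_int: "i \<ge> 1 \<Longrightarrow> integrable M (Xs i)"
  using Xs_integrable[of i "\<lambda>x. x"] X_int by simp

lemma Xs_exp: "i \<ge> 1 \<Longrightarrow> expectation (Xs i) = mu"
  using Xs_integral[of i "\<lambda>x. x"] by (simp add: mu_def)

lemma exp_moment: obtains s0 where "s0 > 0" "integrable M (\<lambda>\<omega>. exp (s0 * X \<omega>))"
proof -
  from light obtain s0 where s0: "s0 > 0" "(\<integral>\<^sup>+ \<omega>. ennreal (exp (s0 * X \<omega>)) \<partial>M) \<noteq> \<infinity>"
    unfolding light_tailed_def heavy_tailed_def by auto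
  have "integrable M (\<lambda>\<omega>. exp (s0 * X \<omega>))"
    by (rule integrableI_nonneg) (use s0 in \<open>auto simp: less_top\<close>)
  with s0 that show ?thesis by blast
qed

lemma sq_moment: "integrable M (\<lambda>\<omega>. (max 0 (X \<omega>))\<^sup>2)"
proof -
  obtain s0 where s0: "s0 > 0" "integrable M (\<lambda>\<omega>. exp (s0 * X \<omega>))" by (rule exp_moment)
  have int: "integrable M (\<lambda>\<omega>. (4 / s0\<^sup>2) * exp (s0 * X \<omega>))" using s0 by simp
  show ?thesis
  proof (rule Bochner_Integration.integrable_bound[OF int], simp, rule AE_I2)
    fix \<omega>
    have "(max 0 (X \<omega>))\<^sup>2 \<le> 4 / s0\<^sup>2 * exp (s0 * X \<omega>)"
    proof (cases "X \<omega> \<le> 0")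
      case True then show ?thesis by (simp add: max_def)
    next
      case False
      let ?z = "s0 * X \<omega> / 2"
      have z0: "0 \<le> ?z" using False s0 by simp
      have "?z \<le> exp ?z" by (rule order_trans[OF _ exp_ge_add_one_self]) simp
      then have "?z\<^sup>2 \<le> (exp ?z)\<^sup>2" using z0 by (intro power_mono) auto
      also have "(exp ?z)\<^sup>2 = exp (s0 * X \<omega>)" by (simp add: power2_eq_square exp_add[symmetric])
      finally have "s0\<^sup>2 * (X \<omega>)\<^sup>2 / 4 \<le> exp (s0 * X \<omega>)" by (simp add: power_divide power_mult_distrib)
      then have "(X \<omega>)\<^sup>2 \<le> 4 / s0\<^sup>2 * exp (s0 * X \<omega>)" using s0 by (simp add: field_simps)
      then show ?thesis using False by (simp add: max_def)
    qed
    then show "norm ((max 0 (X \<omega>))\<^sup>2) \<le> norm (4 / s0\<^sup>2 * exp (s0 * X \<omega>))" by simp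
  qed
qed

definition "C2 = expectation (\<lambda>\<omega>. (max 0 (X \<omega>))\<^sup>2) + 1"

lemma C2_pos: "C2 > 0"
proof -
  have "expectation (\<lambda>\<omega>. (max 0 (X \<omega>))\<^sup>2) \<ge> 0" by (rule integral_nonneg_AE) auto
  then show ?thesis unfolding C2_def by linarith
qed

lemma Xs_sq_int: "i \<ge> 1 \<Longrightarrow> integrable M (\<lambda>\<omega>. (max 0 (Xs i \<omega>))\<^sup>2)"
  using Xs_integrable[of i "\<lambda>x. (max 0 x)\<^sup>2"] sq_moment by simp

lemma Xs_sq_exp: "i \<ge> 1 \<Longrightarrow> expectation (\<lambda>\<omega>. (max 0 (Xs i \<omega>))\<^sup>2) \<le> C2"
  using Xs_integral[of i "\<lambda>x. (max 0 x)\<^sup>2"] by (simp add: C2_def)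

lemma amgm_aux: "(t::real) > 0 \<Longrightarrow> x \<le> t * x\<^sup>2 + 1 / (4 * t)"
proof -
  assume t: "t > 0"
  have "0 \<le> (2 * t * x - 1)\<^sup>2" by simp
  then have "0 \<le> 4 * t\<^sup>2 * x\<^sup>2 - 4 * t * x + 1" by (simp add: power2_eq_square algebra_simps)
  then have "4 * t * x \<le> 4 * t * (t * x\<^sup>2 + 1 / (4 * t))" using t
    by (simp add: algebra_simps power2_eq_square)
  then show ?thesis using t by simp
qed

lemma lin_aux: "(m::real) \<le> a + (m - a) / 2 + z \<Longrightarrow> (m - a) / 2 \<le> z" by argo

lemma T_prob_lower:
  assumes n: "n \<ge> 1" and a: "0 \<le> a" "a < mu"
  shows "prob {\<omega> \<in> space M. T n \<omega> > real n * a} \<ge> (mu - a)\<^sup>2 / (2 * C2)"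
proof -
  define A where "A = {\<omega> \<in> space M. T n \<omega> > real n * a}"
  have A_sets: "A \<in> sets M" unfolding A_def by measurable
  define t where "t = (mu - a) / (2 * C2)"
  have t: "t > 0" using a C2_pos by (simp add: t_def)
  have pw: "T n \<omega> \<le> real n * a + (\<Sum>k\<in>{1..n}. t * (max 0 (Xs k \<omega>))\<^sup>2 + indicator A \<omega> / (4 * t))"
    if w: "\<omega> \<in> space M" for \<omega>
  proof (cases "\<omega> \<in> A")
    case False
    then have "T n \<omega> \<le> real n * a" using w by (auto simp: A_def)
    moreover have "0 \<le> (\<Sum>k\<in>{1..n}. t * (max 0 (Xs k \<omega>))\<^sup>2 + indicator A \<omega> / (4 * t))"
      using t by (intro sum_nonneg) auto
    ultimately show ?thesis by linarith
  next
    case True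
    have "T n \<omega> \<le> (\<Sum>k\<in>{1..n}. max 0 (Xs k \<omega>))" unfolding T_def by (intro sum_mono) auto
    also have "\<dots> \<le> (\<Sum>k\<in>{1..n}. t * (max 0 (Xs k \<omega>))\<^sup>2 + indicator A \<omega> / (4 * t))"
      using True t by (intro sum_mono) (use amgm_aux[OF t] in simp)
    moreover have "0 \<le> real n * a" using a by simp
    ultimately show ?thesis by linarith
  qed
  have intA: "integrable M (\<lambda>\<omega>. indicator A \<omega> :: real)"
    using A_sets by (intro integrable_real_indicator) (auto simp: emeasure_eq_measure)
  have int_terms: "\<And>k. k \<in> {1..n} \<Longrightarrow> integrable M (\<lambda>\<omega>. t * (max 0 (Xs k \<omega>))\<^sup>2 + indicator A \<omega> / (4 * t))"
    using Xs_sq_int intA by auto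
  have "real n * mu = expectation (T n)"
  proof -
    have "expectation (T n) = (\<Sum>k\<in>{1..n}. expectation (Xs k))"
      unfolding T_def by (rule Bochner_Integration.integral_sum) (auto intro: Xs_int)
    also have "\<dots> = (\<Sum>k\<in>{1..n}. mu)" by (intro sum.cong) (auto simp: Xs_exp)
    finally show ?thesis by simp
  qed
  also have "\<dots> \<le> expectation (\<lambda>\<omega>. real n * a + (\<Sum>k\<in>{1..n}. t * (max 0 (Xs k \<omega>))\<^sup>2 + indicator A \<omega> / (4 * t)))"
  proof (rule Bochner_Integration.integral_mono)
    show "integrable M (T n)" unfolding T_def by (rule Bochner_Integration.integrable_sum) (auto intro: Xs_int)
    show "integrable M (\<lambda>\<omega>. real n * a + (\<Sum>k\<in>{1..n}. t * (max 0 (Xs k \<omega>))\<^sup>2 + indicator A \<omega> / (4 * t)))"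
      by (intro Bochner_Integration.integrable_add integrable_const Bochner_Integration.integrable_sum int_terms)
  qed (rule pw)
  also have "\<dots> = real n * a + (\<Sum>k\<in>{1..n}. t * expectation (\<lambda>\<omega>. (max 0 (Xs k \<omega>))\<^sup>2) + prob A / (4 * t))"
  proof -
    have e1: "expectation (\<lambda>\<omega>. t * (max 0 (Xs k \<omega>))\<^sup>2 + indicator A \<omega> / (4 * t))
       = t * expectation (\<lambda>\<omega>. (max 0 (Xs k \<omega>))\<^sup>2) + prob A / (4 * t)" if "k \<in> {1..n}" for k
    proof -
      have "expectation (\<lambda>\<omega>. t * (max 0 (Xs k \<omega>))\<^sup>2 + indicator A \<omega> / (4 * t))
         = expectation (\<lambda>\<omega>. t * (max 0 (Xs k \<omega>))\<^sup>2) + expectation (\<lambda>\<omega>. indicator A \<omega> / (4 * t))"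
        using Xs_sq_int[of k] intA that by (intro Bochner_Integration.integral_add) auto
      also have "expectation (\<lambda>\<omega>. indicator A \<omega> / (4 * t)) = prob A / (4 * t)"
        using A_sets by simp
      finally show ?thesis by simp
    qed
    have "expectation (\<lambda>\<omega>. real n * a + (\<Sum>k\<in>{1..n}. t * (max 0 (Xs k \<omega>))\<^sup>2 + indicator A \<omega> / (4 * t)))
      = expectation (\<lambda>\<omega>. real n * a) + expectation (\<lambda>\<omega>. \<Sum>k\<in>{1..n}. t * (max 0 (Xs k \<omega>))\<^sup>2 + indicator A \<omega> / (4 * t))"
      by (intro Bochner_Integration.integral_add integrable_const Bochner_Integration.integrable_sum int_terms)
    also have "expectation (\<lambda>\<omega>. \<Sum>k\<in>{1..n}. t * (max 0 (Xs k \<omega>))\<^sup>2 + indicator A \<omega> / (4 * t))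
      = (\<Sum>k\<in>{1..n}. expectation (\<lambda>\<omega>. t * (max 0 (Xs k \<omega>))\<^sup>2 + indicator A \<omega> / (4 * t)))"
      by (rule Bochner_Integration.integral_sum) (rule int_terms)
    also have "\<dots> = (\<Sum>k\<in>{1..n}. t * expectation (\<lambda>\<omega>. (max 0 (Xs k \<omega>))\<^sup>2) + prob A / (4 * t))"
      by (intro sum.cong refl e1)
    finally show ?thesis by (simp add: prob_space)
  qed
  also have "\<dots> \<le> real n * a + (\<Sum>k\<in>{1..n}. t * C2 + prob A / (4 * t))"
    using t Xs_sq_exp by (intro add_left_mono sum_mono) auto
  also have "\<dots> = real n * (a + t * C2 + prob A / (4 * t))" by (simp add: algebra_simps)
  finally have "mu \<le> a + t * C2 + prob A / (4 * t)" using n by simp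
  moreover have e1: "t * C2 = (mu - a) / 2" using C2_pos by (simp add: t_def)
  moreover have e2: "prob A / (4 * t) = prob A * C2 / (2 * (mu - a))"
    using C2_pos a by (simp add: t_def field_simps)
  ultimately have "mu \<le> a + (mu - a) / 2 + prob A * C2 / (2 * (mu - a))" by (simp only: e1 e2)
  then have "(mu - a) / 2 \<le> prob A * C2 / (2 * (mu - a))" by (rule lin_aux)
  then have "(mu - a) * (mu - a) \<le> prob A * C2" using a by (simp add: field_simps)
  then have "(mu - a)\<^sup>2 / C2 \<le> prob A" using C2_pos by (simp add: divide_le_eq power2_eq_square)
  moreover have "(mu - a)\<^sup>2 / (2 * C2) \<le> (mu - a)\<^sup>2 / C2" using C2_pos
    by (intro divide_left_mono) auto
  ultimately show ?thesis unfolding A_def by linarith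
qed

definition "G2 = (\<Union>i\<in>{1..}. {Xs i -` A \<inter> space M | A. A \<in> sets borel})"

lemma G2_sub: "G2 \<subseteq> Pow (space M)" unfolding G2_def by auto

lemma T_meas_sigma: "T n \<in> borel_measurable (sigma (space M) G2)"
proof -
  have sp: "space (sigma (space M) G2) = space M" using G2_sub by (rule space_measure_of)
  have st: "sets (sigma (space M) G2) = sigma_sets (space M) G2" using G2_sub by (rule sets_measure_of)
  have "Xs i \<in> borel_measurable (sigma (space M) G2)" if "i \<in> {1..n}" for i
  proof (rule measurableI)
    fix A :: "real set" assume "A \<in> sets borel"
    then have "Xs i -` A \<inter> space M \<in> G2" using that unfolding G2_def by auto
    then show "Xs i -` A \<inter> space (sigma (space M) G2) \<in> sets (sigma (space M) G2)"
      unfolding sp st by (rule sigma_sets.Basic)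
  qed simp
  then show ?thesis unfolding T_def by (rule borel_measurable_sum)
qed

lemma T_event_sigma: "{\<omega> \<in> space M. x < T n \<omega>} \<in> sigma_sets (space M) G2"
proof -
  have sp: "space (sigma (space M) G2) = space M" using G2_sub by (rule space_measure_of)
  have st: "sets (sigma (space M) G2) = sigma_sets (space M) G2" using G2_sub by (rule sets_measure_of)
  have "T n -` {x<..} \<inter> space (sigma (space M) G2) \<in> sets (sigma (space M) G2)"
    by (rule measurable_sets[OF T_meas_sigma]) simp
  moreover have "T n -` {x<..} \<inter> space (sigma (space M) G2) = {\<omega> \<in> space M. x < T n \<omega>}"
    unfolding sp by auto
  ultimately show ?thesis unfolding st by simp
qed

lemma indep_N_T:
  "prob {\<omega> \<in> space M. N \<omega> = n \<and> x < T n \<omega>} =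
     prob {\<omega> \<in> space M. N \<omega> = n} * prob {\<omega> \<in> space M. x < T n \<omega>}"
proof -
  have a: "{\<omega> \<in> space M. N \<omega> = n} \<in>
      sigma_sets (space M) {N -` A \<inter> space M | A. A \<in> sets (count_space UNIV)}"
  proof (rule sigma_sets.Basic)
    have "{\<omega> \<in> space M. N \<omega> = n} = N -` {n} \<inter> space M" by auto
    then show "{\<omega> \<in> space M. N \<omega> = n} \<in> {N -` A \<inter> space M | A. A \<in> sets (count_space UNIV)}"
      by (intro CollectI exI[of _ "{n}"]) simp
  qed
  have b: "{\<omega> \<in> space M. x < T n \<omega>} \<in>
      sigma_sets (space M) (\<Union>i\<in>{1..}. {Xs i -` A \<inter> space M | A. A \<in> sets borel})"
    using T_event_sigma unfolding G2_def .
  have "{\<omega> \<in> space M. N \<omega> = n \<and> x < T n \<omega>} = {\<omega> \<in> space M. N \<omega> = n} \<inter> {\<omega> \<in> space M. x < T n \<omega>}"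
    by auto
  then show ?thesis using indep_setD[OF N_indep a b] by simp
qed

definition "Y \<omega> = mu * real (N \<omega>)"

lemma Y_meas[measurable]: "Y \<in> borel_measurable M" unfolding Y_def by measurable

lemma S_lower:
  assumes eps: "\<epsilon> > 0"
  obtains c where "0 < c" "c \<le> 1"
    "\<And>x. x \<ge> 0 \<Longrightarrow> prob {\<omega> \<in> space M. S \<omega> > x} \<ge> c * prob {\<omega> \<in> space M. Y \<omega> > (1 + \<epsilon>) * x}"
proof -
  define a where "a = mu / (1 + \<epsilon>)"
  have a: "0 < a" "a < mu" using mu_pos' eps by (auto simp: a_def field_simps)
  define c where "c = (mu - a)\<^sup>2 / (2 * C2)"
  have c0: "0 < c" using a C2_pos by (simp add: c_def)
  have cT: "c \<le> prob {\<omega> \<in> space M. x < T n \<omega>}" if "n \<ge> 1" "x \<le> real n * a" for n x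
  proof -
    have "c \<le> prob {\<omega> \<in> space M. T n \<omega> > real n * a}"
      unfolding c_def using T_prob_lower[OF that(1)] a by simp
    also have "\<dots> \<le> prob {\<omega> \<in> space M. x < T n \<omega>}"
      using that by (intro finite_measure_mono) auto
    finally show ?thesis .
  qed
  have c1: "c \<le> 1" using cT[of 1 0] a by (auto intro: order_trans)
  show ?thesis
  proof (rule that[OF c0 c1])
    fix x :: real assume x: "x \<ge> 0"
    define m where "m = nat \<lceil>x / a\<rceil>"
    define B where "B n = {\<omega> \<in> space M. N \<omega> = n \<and> m \<le> n \<and> x < T n \<omega>}" for n
    define D where "D n = {\<omega> \<in> space M. N \<omega> = n \<and> m \<le> n}" for n
    have B_sets: "range B \<subseteq> events" unfolding B_def by auto
    have D_sets: "range D \<subseteq> events" unfolding D_def by auto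
    have B_disj: "disjoint_family B" unfolding B_def disjoint_family_on_def by auto
    have D_disj: "disjoint_family D" unfolding D_def disjoint_family_on_def by auto
    have sB: "(\<lambda>n. prob (B n)) sums prob (\<Union>n. B n)" by (rule finite_measure_UNION[OF B_sets B_disj])
    have sD: "(\<lambda>n. c * prob (D n)) sums (c * prob (\<Union>n. D n))"
      by (rule sums_mult[OF finite_measure_UNION[OF D_sets D_disj]])
    have le: "c * prob (D n) \<le> prob (B n)" for n
    proof (cases "m \<le> n \<and> n \<ge> 1")
      case True
      have "B n = {\<omega> \<in> space M. N \<omega> = n \<and> x < T n \<omega>}" using True by (auto simp: B_def)
      then have "prob (B n) = prob {\<omega> \<in> space M. N \<omega> = n} * prob {\<omega> \<in> space M. x < T n \<omega>}"
        using indep_N_T by simp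
      moreover have "D n = {\<omega> \<in> space M. N \<omega> = n}" using True by (auto simp: D_def)
      moreover have "x \<le> real n * a"
      proof -
        have "x / a \<le> real m" unfolding m_def by linarith
        also have "\<dots> \<le> real n" using True by simp
        finally show ?thesis using a by (simp add: divide_le_eq mult.commute)
      qed
      then have "c \<le> prob {\<omega> \<in> space M. x < T n \<omega>}" using True cT by auto
      ultimately show ?thesis
        using mult_right_mono[of c "prob {\<omega> \<in> space M. x < T n \<omega>}" "prob {\<omega> \<in> space M. N \<omega> = n}"]
        by (simp add: mult.commute)
    next
      case False
      then have "D n = {}" using N_ge1 by (auto simp: D_def)
      then show ?thesis by simp
    qed
    have "c * prob (\<Union>n. D n) \<le> prob (\<Union>n. B n)" by (rule sums_le[OF _ sD sB]) (use le in auto)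
    moreover have "prob (\<Union>n. B n) \<le> prob {\<omega> \<in> space M. S \<omega> > x}"
      by (intro finite_measure_mono) (auto simp: B_def S_eq)
    moreover have "prob {\<omega> \<in> space M. Y \<omega> > (1 + \<epsilon>) * x} \<le> prob (\<Union>n. D n)"
    proof (intro finite_measure_mono)
      show "{\<omega> \<in> space M. Y \<omega> > (1 + \<epsilon>) * x} \<subseteq> (\<Union>n. D n)"
      proof
        fix \<omega> assume w: "\<omega> \<in> {\<omega> \<in> space M. Y \<omega> > (1 + \<epsilon>) * x}"
        then have "mu * real (N \<omega>) > (1 + \<epsilon>) * x" by (auto simp: Y_def)
        then have "real (N \<omega>) > x / a" using eps mu_pos' by (simp add: a_def field_simps)
        then have "m \<le> N \<omega>" unfolding m_def by linarith
        then show "\<omega> \<in> (\<Union>n. D n)" using w by (auto simp: D_def)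
      qed
    qed (use D_sets in auto)
    ultimately show "prob {\<omega> \<in> space M. S \<omega> > x} \<ge> c * prob {\<omega> \<in> space M. Y \<omega> > (1 + \<epsilon>) * x}"
      using c0 by (meson mult_left_mono order_trans less_imp_le)
  qed
qed

lemma chernoff:
  assumes s: "s > 0" and int: "integrable M (\<lambda>\<omega>. exp (s * X \<omega>))"
  shows "prob {\<omega> \<in> space M. x < T n \<omega>} \<le> exp (- s * x) * (expectation (\<lambda>\<omega>. exp (s * X \<omega>))) ^ n"
proof -
  define Mv where "Mv = expectation (\<lambda>\<omega>. exp (s * X \<omega>))"
  have Mv0: "0 \<le> Mv" unfolding Mv_def by (rule integral_nonneg_AE) auto
  define E where "E = {\<omega> \<in> space M. x < T n \<omega>}"
  have E_sets: "E \<in> events" unfolding E_def by measurable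
  have Xs_meas': "\<And>i. i \<in> {1..n} \<Longrightarrow> Xs i \<in> borel_measurable M" using Xs_meas by auto
  have prod_meas: "(\<lambda>\<omega>. \<Prod>i\<in>{1..n}. ennreal (exp (s * Xs i \<omega>))) \<in> borel_measurable M"
  proof (rule borel_measurable_prod_ennreal)
    fix i assume "i \<in> {1..n}"
    note [measurable] = Xs_meas'[OF this]
    show "(\<lambda>\<omega>. ennreal (exp (s * Xs i \<omega>))) \<in> borel_measurable M" by measurable
  qed
  have ind: "indep_vars (\<lambda>_. borel) (\<lambda>i \<omega>. ennreal (exp (s * Xs i \<omega>))) {1..n}"
  proof (rule indep_vars_compose2[where X=Xs and M'="\<lambda>_. borel"])
    show "indep_vars (\<lambda>_. borel) Xs {1..n}" by (rule indep_vars_subset[OF Xs_indep]) auto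
  qed simp
  have each: "(\<integral>\<^sup>+\<omega>. ennreal (exp (s * Xs i \<omega>)) \<partial>M) = ennreal Mv" if "i \<in> {1..n}" for i
  proof -
    have "(\<integral>\<^sup>+\<omega>. ennreal (exp (s * Xs i \<omega>)) \<partial>M) = (\<integral>\<^sup>+\<omega>. ennreal (exp (s * X \<omega>)) \<partial>M)"
      using Xs_nn_integral[of i "\<lambda>x. ennreal (exp (s * x))"] that by simp
    also have "\<dots> = ennreal Mv" unfolding Mv_def
      by (rule nn_integral_eq_integral[OF int]) auto
    finally show ?thesis .
  qed
  have "emeasure M E = (\<integral>\<^sup>+\<omega>. indicator E \<omega> \<partial>M)" using E_sets by simp
  also have "\<dots> \<le> (\<integral>\<^sup>+\<omega>. ennreal (exp (- s * x)) * (\<Prod>i\<in>{1..n}. ennreal (exp (s * Xs i \<omega>))) \<partial>M)"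
  proof (rule nn_integral_mono)
    fix \<omega> assume w: "\<omega> \<in> space M"
    have pr: "(\<Prod>i\<in>{1..n}. ennreal (exp (s * Xs i \<omega>))) = ennreal (exp (s * T n \<omega>))"
      by (simp add: prod_ennreal T_def sum_distrib_left exp_sum)
    have "ennreal (exp (- s * x)) * (\<Prod>i\<in>{1..n}. ennreal (exp (s * Xs i \<omega>))) = ennreal (exp (s * (T n \<omega> - x)))"
      unfolding pr by (simp add: ennreal_mult[symmetric] exp_add[symmetric] algebra_simps)
    moreover have "indicator E \<omega> \<le> ennreal (exp (s * (T n \<omega> - x)))"
    proof (cases "\<omega> \<in> E")
      case True
      then have "0 \<le> s * (T n \<omega> - x)" using s by (auto simp: E_def)
      then have "1 \<le> exp (s * (T n \<omega> - x))" by simp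
      then show ?thesis using True by simp
    qed simp
    ultimately show "indicator E \<omega> \<le> ennreal (exp (- s * x)) * (\<Prod>i\<in>{1..n}. ennreal (exp (s * Xs i \<omega>)))"
      by simp
  qed
  also have "\<dots> = ennreal (exp (- s * x)) * (\<integral>\<^sup>+\<omega>. (\<Prod>i\<in>{1..n}. ennreal (exp (s * Xs i \<omega>))) \<partial>M)"
    by (rule nn_integral_cmult[OF prod_meas])
  also have "(\<integral>\<^sup>+\<omega>. (\<Prod>i\<in>{1..n}. ennreal (exp (s * Xs i \<omega>))) \<partial>M)
      = (\<Prod>i\<in>{1..n}. \<integral>\<^sup>+\<omega>. ennreal (exp (s * Xs i \<omega>)) \<partial>M)"
    by (rule indep_vars_nn_integral[OF _ ind]) auto
  also have "\<dots> = (\<Prod>i\<in>{1..n}. ennreal Mv)" by (rule prod.cong[OF refl each])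
  also have "\<dots> = ennreal (Mv ^ n)" using Mv0 by (simp add: ennreal_power)
  finally have "emeasure M E \<le> ennreal (exp (- s * x) * Mv ^ n)"
    using Mv0 by (simp add: ennreal_mult)
  then show ?thesis using Mv0 unfolding Mv_def[symmetric] E_def[symmetric]
    by (simp add: emeasure_eq_measure)
qed

lemma bound_aux:
  fixes s s0 y :: real
  assumes s: "0 < s" "s \<le> s0 / 2" and s0: "s0 > 0"
  shows "\<bar>(exp (s * y) - 1) / s\<bar> \<le> \<bar>y\<bar> + 2 / s0 * exp (s0 * y)"
proof (cases "y \<ge> 0")
  case True
  let ?u = "s * y"
  have u0: "0 \<le> ?u" using s True by simp
  have "1 - ?u \<le> exp (- ?u)" using exp_ge_add_one_self[of "- ?u"] by simp
  then have "(1 - ?u) * exp ?u \<le> exp (- ?u) * exp ?u" by (intro mult_right_mono) auto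
  then have "(1 - ?u) * exp ?u \<le> 1" by (simp add: exp_minus field_simps)
  then have e1: "exp ?u - 1 \<le> ?u * exp ?u" by (simp add: algebra_simps)
  have e1': "0 \<le> exp ?u - 1" using u0 by simp
  have "(exp ?u - 1) / s \<le> y * exp ?u" using e1 s by (simp add: divide_le_eq mult.commute mult.left_commute)
  also have "\<dots> \<le> y * exp (s0 * y / 2)"
  proof (intro mult_left_mono)
    have "s * y \<le> s0 / 2 * y" using mult_right_mono[OF s(2) True] .
    then show "exp (s * y) \<le> exp (s0 * y / 2)" by simp
  qed (use True in simp)
  also have "\<dots> \<le> (2 / s0 * exp (s0 * y / 2)) * exp (s0 * y / 2)"
  proof (intro mult_right_mono)
    have "s0 * y / 2 \<le> exp (s0 * y / 2)" by (rule order_trans[OF _ exp_ge_add_one_self]) simp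
    then show "y \<le> 2 / s0 * exp (s0 * y / 2)" using s0 by (simp add: field_simps)
  qed simp
  also have "\<dots> = 2 / s0 * exp (s0 * y)" by (simp add: exp_add[symmetric])
  finally have "(exp ?u - 1) / s \<le> 2 / s0 * exp (s0 * y)" .
  moreover have "0 \<le> (exp ?u - 1) / s" using e1' s by simp
  ultimately show ?thesis using True by simp
next
  case False
  let ?u = "s * y"
  have u0: "?u \<le> 0" using s False by (simp add: mult_nonneg_nonpos)
  have "1 + ?u \<le> exp ?u" by (rule exp_ge_add_one_self)
  moreover have "exp ?u \<le> 1" using u0 by simp
  ultimately have "\<bar>exp ?u - 1\<bar> \<le> - ?u" by (smt (verit))
  then have "\<bar>exp ?u - 1\<bar> / s \<le> (- ?u) / s" using s by (intro divide_right_mono) auto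
  then have "\<bar>(exp ?u - 1) / s\<bar> \<le> - y" using s by simp
  moreover have "0 \<le> 2 / s0 * exp (s0 * y)" using s0 by simp
  ultimately show ?thesis using False by simp
qed

lemma exp_int:
  assumes s0: "integrable M (\<lambda>\<omega>. exp (s0 * X \<omega>))" and s: "0 \<le> s" "s \<le> s0"
  shows "integrable M (\<lambda>\<omega>. exp (s * X \<omega>))"
proof (rule Bochner_Integration.integrable_bound)
  show "integrable M (\<lambda>\<omega>. 1 + exp (s0 * X \<omega>))" using s0 by simp
  show "AE \<omega> in M. norm (exp (s * X \<omega>)) \<le> norm (1 + exp (s0 * X \<omega>))"
  proof (rule AE_I2)
    fix \<omega>
    have "exp (s * X \<omega>) \<le> 1 + exp (s0 * X \<omega>)"
    proof (cases "X \<omega> \<ge> 0")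
      case True
      then have "s * X \<omega> \<le> s0 * X \<omega>" using s by (simp add: mult_right_mono)
      then show ?thesis by (smt (verit) exp_le_cancel_iff)
    next
      case False
      then have "s * X \<omega> \<le> 0" using s by (simp add: mult_nonneg_nonpos)
      then show ?thesis by (smt (verit) exp_gt_zero one_le_exp_iff exp_le_one_iff)
    qed
    then show "norm (exp (s * X \<omega>)) \<le> norm (1 + exp (s0 * X \<omega>))" by simp
  qed
qed simp

lemma mgf_small:
  assumes b: "b > mu"
  obtains s where "s > 0" "integrable M (\<lambda>\<omega>. exp (s * X \<omega>))" "expectation (\<lambda>\<omega>. exp (s * X \<omega>)) \<le> exp (s * b)"
proof -
  obtain s0 where s0: "s0 > 0" "integrable M (\<lambda>\<omega>. exp (s0 * X \<omega>))" by (rule exp_moment)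
  define sk where "sk k = s0 / 2 * inverse (real (Suc k))" for k
  have sk_pos: "sk k > 0" for k using s0 by (simp add: sk_def)
  have sk_le: "sk k \<le> s0 / 2" for k
  proof -
    have "inverse (real (Suc k)) \<le> 1" by (simp add: inverse_eq_divide divide_le_eq_1)
    then show ?thesis using s0 unfolding sk_def by (intro mult_left_le) auto
  qed
  have sk_lim: "sk \<longlonglongrightarrow> 0"
    unfolding sk_def using tendsto_mult[OF tendsto_const LIMSEQ_inverse_real_of_nat, of "s0/2"] by simp
  have sk_at: "filterlim sk (at 0) sequentially"
  proof (rule filterlim_atI[OF sk_lim], rule always_eventually, rule allI)
    fix k show "sk k \<noteq> 0" using sk_pos[of k] by simp
  qed
  have pw: "(\<lambda>k. (exp (sk k * y) - 1) / sk k) \<longlonglongrightarrow> y" for y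
  proof -
    have "((\<lambda>t. exp (t * y)) has_field_derivative exp (0 * y) * y) (at 0)"
      by (auto intro!: derivative_eq_intros)
    then have "((\<lambda>t. (exp (t * y) - exp (0 * y)) / (t - 0)) \<longlongrightarrow> y) (at 0)"
      unfolding has_field_derivative_iff by simp
    then have "((\<lambda>t. (exp (t * y) - 1) / t) \<longlongrightarrow> y) (at 0)" by simp
    from filterlim_compose[OF this sk_at] show ?thesis .
  qed
  define w where "w \<omega> = \<bar>X \<omega>\<bar> + 2 / s0 * exp (s0 * X \<omega>)" for \<omega>
  have w_int: "integrable M w" unfolding w_def using s0 X_int by auto
  have int_k: "integrable M (\<lambda>\<omega>. exp (sk k * X \<omega>))" for k
    by (rule exp_int[OF s0(2)]) (use sk_pos[of k] sk_le[of k] s0 in auto)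
  have lim: "(\<lambda>k. expectation (\<lambda>\<omega>. (exp (sk k * X \<omega>) - 1) / sk k)) \<longlonglongrightarrow> expectation X"
  proof (rule integral_dominated_convergence[OF X_meas _ w_int])
    show "AE \<omega> in M. (\<lambda>k. (exp (sk k * X \<omega>) - 1) / sk k) \<longlonglongrightarrow> X \<omega>" by (rule AE_I2) (rule pw)
    fix k
    show "(\<lambda>\<omega>. (exp (sk k * X \<omega>) - 1) / sk k) \<in> borel_measurable M" by measurable
    show "AE \<omega> in M. norm ((exp (sk k * X \<omega>) - 1) / sk k) \<le> w \<omega>"
      by (rule AE_I2) (use bound_aux[OF sk_pos sk_le s0(1)] in \<open>simp add: w_def\<close>)
  qed
  have "eventually (\<lambda>k. expectation (\<lambda>\<omega>. (exp (sk k * X \<omega>) - 1) / sk k) < b) sequentially"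
    by (rule order_tendstoD(2)[OF lim]) (use b in \<open>simp add: mu_def\<close>)
  then obtain k where k: "expectation (\<lambda>\<omega>. (exp (sk k * X \<omega>) - 1) / sk k) < b"
    by (auto simp: eventually_sequentially)
  have "expectation (\<lambda>\<omega>. (exp (sk k * X \<omega>) - 1) / sk k) = (expectation (\<lambda>\<omega>. exp (sk k * X \<omega>)) - 1) / sk k"
    using int_k[of k] by (simp add: Bochner_Integration.integral_diff prob_space)
  with k have "expectation (\<lambda>\<omega>. exp (sk k * X \<omega>)) < 1 + sk k * b"
    using sk_pos[of k] by (simp add: divide_less_eq algebra_simps)
  also have "\<dots> \<le> exp (sk k * b)" by (rule exp_ge_add_one_self)
  finally have "expectation (\<lambda>\<omega>. exp (sk k * X \<omega>)) < exp (sk k * b)" .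
  then show ?thesis by (intro that[OF sk_pos[of k] int_k[of k]]) simp
qed

lemma S_upper:
  assumes eps: "0 < \<epsilon>" "\<epsilon> < 1"
  obtains c where "0 < c"
    "\<And>x. x \<ge> 0 \<Longrightarrow> prob {\<omega> \<in> space M. S \<omega> > x} \<le>
        prob {\<omega> \<in> space M. Y \<omega> > (1 - \<epsilon>) * x} + x / mu * exp (- c * x)"
proof -
  define b where "b = mu * (1 + \<epsilon>)"
  have b: "b > mu" using eps mu_pos' by (simp add: b_def)
  obtain s where s: "s > 0" "integrable M (\<lambda>\<omega>. exp (s * X \<omega>))"
      "expectation (\<lambda>\<omega>. exp (s * X \<omega>)) \<le> exp (s * b)"
    using mgf_small[OF b] by blast
  define Mv where "Mv = expectation (\<lambda>\<omega>. exp (s * X \<omega>))"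
  have Mv0: "0 \<le> Mv" unfolding Mv_def by (rule integral_nonneg_AE) auto
  define c where "c = s * \<epsilon>\<^sup>2"
  have c0: "0 < c" using s eps by (simp add: c_def)
  show ?thesis
  proof (rule that[OF c0])
    fix x :: real assume x: "x \<ge> 0"
    define K where "K = nat \<lfloor>(1 - \<epsilon>) * x / mu\<rfloor>"
    have K_le: "real K \<le> (1 - \<epsilon>) * x / mu"
    proof -
      have "0 \<le> (1 - \<epsilon>) * x / mu" using eps x mu_pos' by simp
      then show ?thesis unfolding K_def by linarith
    qed
    have K_le2: "real K \<le> x / mu"
    proof -
      have "(1 - \<epsilon>) * x / mu \<le> x / mu" using eps x mu_pos' by (simp add: divide_right_mono mult_left_le_one_le)
      then show ?thesis using K_le by argo
    qed
    define A where "A = {\<omega> \<in> space M. Y \<omega> > (1 - \<epsilon>) * x}"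
    define F where "F n = {\<omega> \<in> space M. x < T n \<omega>}" for n
    have A_sets: "A \<in> events" unfolding A_def by measurable
    have F_sets: "F n \<in> events" for n unfolding F_def by measurable
    have bnd: "prob (F n) \<le> exp (- c * x)" if n: "n \<in> {1..K}" for n
    proof -
      have "prob (F n) \<le> exp (- s * x) * Mv ^ n" unfolding F_def Mv_def by (rule chernoff[OF s(1,2)])
      also have "\<dots> \<le> exp (- s * x) * exp (s * b) ^ n"
        using Mv0 s(3) unfolding Mv_def[symmetric] by (intro mult_left_mono power_mono) auto
      also have "\<dots> = exp (- s * x + real n * (s * b))"
        by (simp only: exp_add exp_of_nat_mult)
      also have "\<dots> \<le> exp (- c * x)"
      proof -
        have "real n \<le> (1 - \<epsilon>) * x / mu" using n K_le by simp
        then have "real n * (s * b) \<le> (1 - \<epsilon>) * x / mu * (s * b)"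
          using s b mu_pos' by (intro mult_right_mono) auto
        also have "\<dots> = s * x * (1 - \<epsilon>\<^sup>2)" using mu_pos'
          by (simp add: b_def field_simps power2_eq_square)
        finally have "- s * x + real n * (s * b) \<le> - c * x"
          by (simp add: c_def algebra_simps)
        then show ?thesis by simp
      qed
      finally show ?thesis .
    qed
    have sub: "{\<omega> \<in> space M. S \<omega> > x} \<subseteq> A \<union> (\<Union>n\<in>{1..K}. F n)"
    proof
      fix \<omega> assume w: "\<omega> \<in> {\<omega> \<in> space M. S \<omega> > x}"
      show "\<omega> \<in> A \<union> (\<Union>n\<in>{1..K}. F n)"
      proof (cases "\<omega> \<in> A")
        case False
        then have "mu * real (N \<omega>) \<le> (1 - \<epsilon>) * x" using w by (auto simp: A_def Y_def)
        then have "real (N \<omega>) \<le> (1 - \<epsilon>) * x / mu" using mu_pos' by (simp add: le_divide_eq mult.commute)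
        then have "N \<omega> \<le> K" unfolding K_def by linarith
        moreover have "N \<omega> \<ge> 1" using w N_ge1 by auto
        moreover have "\<omega> \<in> F (N \<omega>)" using w by (auto simp: F_def S_eq)
        ultimately show ?thesis by auto
      qed simp
    qed
    have "prob {\<omega> \<in> space M. S \<omega> > x} \<le> prob (A \<union> (\<Union>n\<in>{1..K}. F n))"
      by (rule finite_measure_mono[OF sub]) (use A_sets F_sets in auto)
    also have "\<dots> \<le> prob A + prob (\<Union>n\<in>{1..K}. F n)"
      by (rule measure_Un_le) (use A_sets F_sets in auto)
    also have "prob (\<Union>n\<in>{1..K}. F n) \<le> (\<Sum>n\<in>{1..K}. prob (F n))"
      by (rule measure_UNION_le) (use F_sets in auto)
    also have "\<dots> \<le> (\<Sum>n\<in>{1..K}. exp (- c * x))" by (rule sum_mono) (rule bnd)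
    also have "\<dots> = real K * exp (- c * x)" by simp
    also have "\<dots> \<le> x / mu * exp (- c * x)" using K_le2 by (intro mult_right_mono) auto
    finally show "prob {\<omega> \<in> space M. S \<omega> > x} \<le> prob {\<omega> \<in> space M. Y \<omega> > (1 - \<epsilon>) * x} + x / mu * exp (- c * x)"
      unfolding A_def by simp
  qed
qed

lemma Y_eq: "(\<lambda>\<omega>. expectation X * real (N \<omega>)) = Y" by (simp add: Y_def mu_def fun_eq_iff)

lemma scaleY: "natural_scale M Y h" using h_scale unfolding Y_eq .

lemma h_concave: "concave_on {0..} h" and h0: "h 0 = 0" and h_nonneg: "\<And>x. x \<ge> 0 \<Longrightarrow> h x \<ge> 0"
  and h_lim: "filterlim h at_top at_top"
  and g_lim: "Liminf at_top (\<lambda>x. ereal (tail_exponent M Y x / h x)) = 1"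
  using scaleY unfolding natural_scale_def by auto

lemma hc1: assumes "0 \<le> t" "t \<le> 1" "0 \<le> x" shows "t * h x \<le> h (t * x)"
  using concave_onD[OF h_concave assms(1,2), of 0 x] assms by (simp add: h0)

lemma hc2: assumes "1 \<le> l" "0 \<le> x" shows "h (l * x) \<le> l * h x"
proof -
  have "(1 / l) * h (l * x) \<le> h ((1 / l) * (l * x))"
    using assms by (intro hc1) auto
  then show ?thesis using assms by (simp add: field_simps)
qed

lemma h_ev: "eventually (\<lambda>x. h x \<ge> C) at_top"
  using h_lim by (simp add: filterlim_at_top)

lemma pY_pos: "prob {\<omega> \<in> space M. Y \<omega> > y} > 0"
proof (rule ccontr)
  assume "\<not> prob {\<omega> \<in> space M. Y \<omega> > y} > 0"
  then have z: "prob {\<omega> \<in> space M. Y \<omega> > y} = 0" using measure_nonneg[of M] by (simp add: not_less antisym)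
  define K where "K = max 0 (y / mu)"
  have ae: "AE \<omega> in M. ennreal (exp (1 * real (N \<omega>))) \<le> ennreal (exp K)"
  proof (rule AE_I[of _ _ "{\<omega> \<in> space M. Y \<omega> > y}"])
    show "{\<omega> \<in> space M. \<not> ennreal (exp (1 * real (N \<omega>))) \<le> ennreal (exp K)} \<subseteq> {\<omega> \<in> space M. Y \<omega> > y}"
    proof safe
      fix \<omega> assume w: "\<omega> \<in> space M" "\<not> ennreal (exp (1 * real (N \<omega>))) \<le> ennreal (exp K)"
      then have "real (N \<omega>) > K" by (auto simp: not_le)
      then have "real (N \<omega>) > y / mu" unfolding K_def by simp
      then show "Y \<omega> > y" using mu_pos' by (simp add: Y_def divide_less_eq mult.commute)
    qed
    show "emeasure M {\<omega> \<in> space M. Y \<omega> > y} = 0" using z by (simp add: emeasure_eq_measure)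
    show "{\<omega> \<in> space M. Y \<omega> > y} \<in> events" by measurable
  qed
  have "(\<integral>\<^sup>+\<omega>. ennreal (exp (1 * real (N \<omega>))) \<partial>M) \<le> (\<integral>\<^sup>+\<omega>. ennreal (exp K) \<partial>M)"
    by (rule nn_integral_mono_AE[OF ae])
  also have "\<dots> = ennreal (exp K)" by (simp add: emeasure_space_1)
  finally have le: "(\<integral>\<^sup>+\<omega>. ennreal (exp (1 * real (N \<omega>))) \<partial>M) \<le> ennreal (exp K)" .
  have "(\<integral>\<^sup>+\<omega>. ennreal (exp (1 * real (N \<omega>))) \<partial>M) < \<infinity>"
    using le_less_trans[OF le ennreal_less_top] by simp
  then show False using N_heavy[unfolded heavy_tailed_def, rule_format, of 1] by simp
qed

lemma pY_eq: "0 < tail_exponent M Y x \<or> True" by simp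

lemma Q_bound:
  assumes "tail_exponent M Y x > r"
  shows "prob {\<omega> \<in> space M. Y \<omega> > x} < exp (- r)"
proof -
  have p: "prob {\<omega> \<in> space M. Y \<omega> > x} > 0" by (rule pY_pos)
  have "ln (prob {\<omega> \<in> space M. Y \<omega> > x}) < - r" using assms by (simp add: tail_exponent_def)
  then have "exp (ln (prob {\<omega> \<in> space M. Y \<omega> > x})) < exp (- r)" by simp
  then show ?thesis using p by simp
qed

lemma N_tail: "{\<omega> \<in> space M. n < N \<omega>} = {\<omega> \<in> space M. Y \<omega> > mu * real n}"
  using mu_pos' by (auto simp: Y_def)

lemma gint_aux:
  assumes D: "D \<in> events" and p: "prob D \<le> exp (- 2 * s * real n)"
  shows "(\<integral>\<^sup>+\<omega>. ennreal (exp (s * (real n + 1))) * indicator D \<omega> \<partial>M) \<le> ennreal (exp s * exp (- s) ^ n)"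
proof -
  have ex: "exp (s * (real n + 1)) * exp (- 2 * s * real n) = exp s * exp (- s) ^ n"
  proof -
    have "exp (s * (real n + 1)) * exp (- 2 * s * real n) = exp (s * (real n + 1) + - 2 * s * real n)"
      by (simp only: exp_add)
    also have "s * (real n + 1) + - 2 * s * real n = s + real n * (- s)" by (simp add: algebra_simps)
    also have "exp (s + real n * (- s)) = exp s * exp (- s) ^ n" by (simp only: exp_add exp_of_nat_mult)
    finally show ?thesis .
  qed
  have "(\<integral>\<^sup>+\<omega>. ennreal (exp (s * (real n + 1))) * indicator D \<omega> \<partial>M)
     = ennreal (exp (s * (real n + 1))) * emeasure M D"
    using D by (simp add: nn_integral_cmult_indicator)
  also have "emeasure M D = ennreal (prob D)" by (simp add: emeasure_eq_measure)
  finally have 1: "(\<integral>\<^sup>+\<omega>. ennreal (exp (s * (real n + 1))) * indicator D \<omega> \<partial>M)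
     = ennreal (exp (s * (real n + 1))) * ennreal (prob D)" .
  have 2: "ennreal (prob D) \<le> ennreal (exp (- 2 * s * real n))" using p by simp
  have 3: "ennreal (exp (s * (real n + 1))) * ennreal (prob D) \<le> ennreal (exp (s * (real n + 1))) * ennreal (exp (- 2 * s * real n))"
    using 2 by (rule mult_left_mono) simp
  have 4: "ennreal (exp (s * (real n + 1))) * ennreal (exp (- 2 * s * real n)) = ennreal (exp s * exp (- s) ^ n)"
    by (simp only: ennreal_mult[symmetric] exp_ge_zero ex)
  show ?thesis unfolding 1 using 3 unfolding 4 .
qed


lemma tail_exp_bound:
  assumes c: "c > 0" and all: "\<And>x. x > 0 \<Longrightarrow> h x \<ge> c * x"
  obtains x1 where "x1 > 0" "\<And>x. x \<ge> x1 \<Longrightarrow> prob {\<omega> \<in> space M. Y \<omega> > x} \<le> exp (- (c / 2) * x)"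
proof -
  have ev: "eventually (\<lambda>x. tail_exponent M Y x / h x > 1 - 1/2 \<and> h x \<ge> 1) at_top"
    by (intro eventually_conj liminf_lower[OF g_lim] h_ev) simp
  then obtain x0 where x0: "\<And>x. x \<ge> x0 \<Longrightarrow> tail_exponent M Y x / h x > 1 - 1/2 \<and> h x \<ge> 1"
    unfolding eventually_at_top_linorder by auto
  define x1 where "x1 = max x0 1"
  have "prob {\<omega> \<in> space M. Y \<omega> > x} \<le> exp (- (c / 2) * x)" if x: "x \<ge> x1" for x
  proof -
    have xx: "x \<ge> x0" "x > 0" using x by (auto simp: x1_def)
    then have h1: "tail_exponent M Y x / h x > 1/2" "h x \<ge> 1" using x0 by auto
    then have t1: "tail_exponent M Y x > h x / 2" by (simp add: field_simps)
    have t2: "h x \<ge> c * x" using all xx(2) by simp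
    have "tail_exponent M Y x > c / 2 * x" using t1 t2 by argo
    from Q_bound[OF this] show ?thesis by simp
  qed
  moreover have "x1 > 0" by (simp add: x1_def)
  ultimately show ?thesis using that by blast
qed

lemma N_mgf_contra:
  assumes s0: "s > 0" and tailN: "\<And>n. n0 \<le> n \<Longrightarrow> prob {\<omega> \<in> space M. n < N \<omega>} \<le> exp (- 2 * s * real n)"
  shows False
proof -
  define D where "D n = {\<omega> \<in> space M. n0 \<le> n \<and> n < N \<omega>}" for n
  have D_sets: "D n \<in> events" for n unfolding D_def by measurable
  define g where "g n \<omega> = ennreal (exp (s * (real n + 1))) * indicator (D n) \<omega>" for n \<omega>
  have g_meas: "g n \<in> borel_measurable M" for n
    unfolding g_def by (intro borel_measurable_times_ennreal borel_measurable_const borel_measurable_indicator D_sets)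
  have pw: "ennreal (exp (s * real (N \<omega>))) \<le> ennreal (exp (s * real n0)) + (\<Sum>n. g n \<omega>)"
    if w: "\<omega> \<in> space M" for \<omega>
  proof (cases "N \<omega> \<le> n0")
    case True
    then have "exp (s * real (N \<omega>)) \<le> exp (s * real n0)" using s0 by simp
    then have "ennreal (exp (s * real (N \<omega>))) \<le> ennreal (exp (s * real n0))" by simp
    then show ?thesis by (rule add_increasing2[rotated]) simp
  next
    case False
    define n where "n = N \<omega> - 1"
    have n: "n0 \<le> n" "n < N \<omega>" "real n + 1 = real (N \<omega>)" using False by (auto simp: n_def)
    have "g n \<omega> = ennreal (exp (s * real (N \<omega>)))" using n w by (simp add: g_def D_def)
    moreover have "g n \<omega> \<le> (\<Sum>n. g n \<omega>)"
      using sum_le_suminf[of "\<lambda>n. g n \<omega>" "{n}"] by simp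
    ultimately have "ennreal (exp (s * real (N \<omega>))) \<le> (\<Sum>n. g n \<omega>)" by simp
    then show ?thesis by (rule add_increasing[rotated]) simp
  qed
  have gint: "(\<integral>\<^sup>+\<omega>. g n \<omega> \<partial>M) \<le> ennreal (exp s * exp (- s) ^ n)" for n
  proof (cases "n0 \<le> n")
    case True
    have "prob (D n) \<le> exp (- 2 * s * real n)"
      using tailN[OF True] True by (simp add: D_def)
    then show ?thesis unfolding g_def by (rule gint_aux[OF D_sets])
  next
    case False
    then have "D n = {}" by (simp add: D_def)
    then show ?thesis by (simp add: g_def)
  qed
  have summ: "summable (\<lambda>n. exp s * exp (- s) ^ n)"
    using s0 by (intro summable_mult summable_geometric) simp
  have "(\<integral>\<^sup>+\<omega>. ennreal (exp (s * real (N \<omega>))) \<partial>M) \<le> (\<integral>\<^sup>+\<omega>. ennreal (exp (s * real n0)) + (\<Sum>n. g n \<omega>) \<partial>M)"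
    by (rule nn_integral_mono) (rule pw)
  also have "\<dots> = ennreal (exp (s * real n0)) + (\<Sum>n. \<integral>\<^sup>+\<omega>. g n \<omega> \<partial>M)"
  proof -
    have "(\<integral>\<^sup>+\<omega>. ennreal (exp (s * real n0)) + (\<Sum>n. g n \<omega>) \<partial>M)
       = (\<integral>\<^sup>+\<omega>. ennreal (exp (s * real n0)) \<partial>M) + (\<integral>\<^sup>+\<omega>. (\<Sum>n. g n \<omega>) \<partial>M)"
      by (rule nn_integral_add[OF _ borel_measurable_suminf_order[OF g_meas]]) simp
    also have "(\<integral>\<^sup>+\<omega>. (\<Sum>n. g n \<omega>) \<partial>M) = (\<Sum>n. \<integral>\<^sup>+\<omega>. g n \<omega> \<partial>M)"
      by (rule nn_integral_suminf) (rule g_meas)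
    also have "(\<integral>\<^sup>+\<omega>. ennreal (exp (s * real n0)) \<partial>M) = ennreal (exp (s * real n0))"
      by (simp add: emeasure_space_1)
    finally show ?thesis .
  qed
  also have "\<dots> \<le> ennreal (exp (s * real n0)) + (\<Sum>n. ennreal (exp s * exp (- s) ^ n))"
    by (rule add_left_mono, rule suminf_le[OF gint summableI summableI])
  finally have le: "(\<integral>\<^sup>+\<omega>. ennreal (exp (s * real (N \<omega>))) \<partial>M) \<le> ennreal (exp (s * real n0)) + (\<Sum>n. ennreal (exp s * exp (- s) ^ n))" .
  have fin: "(\<Sum>n. ennreal (exp s * exp (- s) ^ n)) \<noteq> \<top>"
    by (rule ennreal_suminf_neq_top[OF summ]) simp
  have fin2: "ennreal (exp (s * real n0)) + (\<Sum>n. ennreal (exp s * exp (- s) ^ n)) \<noteq> \<top>"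
    using fin by simp
  have inf: "(\<integral>\<^sup>+\<omega>. ennreal (exp (s * real (N \<omega>))) \<partial>M) = \<infinity>"
    using N_heavy[unfolded heavy_tailed_def, rule_format, OF s0] .
  from le fin2 show False unfolding inf by (simp add: top_unique)
qed

lemma h_small: assumes c: "c > 0" shows "eventually (\<lambda>x. h x \<le> c * x) at_top"
proof (rule ccontr)
  assume "\<not> eventually (\<lambda>x. h x \<le> c * x) at_top"
  then have freq: "\<exists>y\<ge>K. h y > c * y" for K
    unfolding eventually_at_top_linorder by (auto simp: not_le)
  have all: "h x \<ge> c * x" if x: "x > 0" for x
  proof -
    obtain y where y: "y \<ge> x" "h y > c * y" using freq[of x] by auto
    have y0: "y > 0" using x y by simp
    have "(x / y) * h y \<le> h ((x / y) * y)" using x y0 y by (intro hc1) auto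
    then have f1: "(x / y) * h y \<le> h x" using y0 by simp
    have f2: "(x / y) * (c * y) \<le> (x / y) * h y" using x y0 y by (intro mult_left_mono) auto
    have e: "(x / y) * (c * y) = c * x" using y0 by simp
    show ?thesis using order_trans[OF f2 f1] unfolding e .
  qed
  obtain x1 where x1: "x1 > 0" "\<And>x. x \<ge> x1 \<Longrightarrow> prob {\<omega> \<in> space M. Y \<omega> > x} \<le> exp (- (c / 2) * x)"
    using tail_exp_bound[OF c all] by blast
  define s where "s = c * mu / 4"
  have s0: "s > 0" using c mu_pos' by (simp add: s_def)
  define n0 where "n0 = nat \<lceil>x1 / mu\<rceil>"
  show False
  proof (rule N_mgf_contra[OF s0])
    fix n assume n: "n0 \<le> n"
    have "x1 / mu \<le> real n0" unfolding n0_def by linarith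
    also have "\<dots> \<le> real n" using n by simp
    finally have "x1 \<le> mu * real n" using mu_pos' by (simp add: divide_le_eq mult.commute)
    then have "prob {\<omega> \<in> space M. Y \<omega> > mu * real n} \<le> exp (- (c / 2) * (mu * real n))"
      by (rule x1(2))
    moreover have "- (c / 2) * (mu * real n) = - 2 * s * real n" by (simp add: s_def)
    ultimately have "prob {\<omega> \<in> space M. Y \<omega> > mu * real n} \<le> exp (- 2 * s * real n)" by (simp only:)
    then show "prob {\<omega> \<in> space M. n < N \<omega>} \<le> exp (- 2 * s * real n)" unfolding N_tail .
  qed
qed

lemma lin3: "(a::real) \<le> b + q \<Longrightarrow> b \<le> e1 \<Longrightarrow> q < t1 \<Longrightarrow> t1 \<le> t2 \<Longrightarrow> a < e1 + t2" by argo

lemma pS_ge: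
  assumes "c * prob {\<omega> \<in> space M. Y \<omega> > y} \<le> prob {\<omega> \<in> space M. S \<omega> > x}" "c > 0"
  shows "tail_exponent M S x \<le> - ln c + tail_exponent M Y y"
proof -
  have p: "prob {\<omega> \<in> space M. Y \<omega> > y} > 0" by (rule pY_pos)
  have cp: "c * prob {\<omega> \<in> space M. Y \<omega> > y} > 0" using p assms(2) by simp
  have "ln (c * prob {\<omega> \<in> space M. Y \<omega> > y}) \<le> ln (prob {\<omega> \<in> space M. S \<omega> > x})"
    using assms(1) cp by simp
  moreover have "ln (c * prob {\<omega> \<in> space M. Y \<omega> > y}) = ln c + ln (prob {\<omega> \<in> space M. Y \<omega> > y})"
    using p assms(2) by (simp add: ln_mult_pos)
  ultimately show ?thesis unfolding tail_exponent_def by argo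
qed

lemma R_upper:
  assumes eps: "\<epsilon> > 0"
  shows "\<exists>x\<ge>K. tail_exponent M S x / h x < 1 + \<epsilon>"
proof -
  define e where "e = min 1 (\<epsilon> / 4)"
  have e: "0 < e" "e \<le> 1" "e \<le> \<epsilon> / 4" using eps by (auto simp: e_def)
  obtain c where c: "0 < c" "c \<le> 1"
    "\<And>x. x \<ge> 0 \<Longrightarrow> prob {\<omega> \<in> space M. S \<omega> > x} \<ge> c * prob {\<omega> \<in> space M. Y \<omega> > (1 + e) * x}"
    using S_lower[OF e(1)] by blast
  have lnc: "- ln c \<ge> 0" using c by simp
  obtain K1 where K1: "\<And>x. x \<ge> K1 \<Longrightarrow> h x \<ge> max 1 (- ln c / e)"
    using h_ev[of "max 1 (- ln c / e)"] unfolding eventually_at_top_linorder by auto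
  define K2 where "K2 = max (max K K1) 1"
  obtain y where y: "y \<ge> (1 + e) * K2" "tail_exponent M Y y / h y < 1 + e"
    using liminf_upper[OF g_lim e(1), of "(1 + e) * K2"] by blast
  define x where "x = y / (1 + e)"
  have yx: "y = (1 + e) * x" using e by (simp add: x_def)
  have xK2: "x \<ge> K2" using y(1) e by (simp add: x_def le_divide_eq mult.commute)
  then have xK: "x \<ge> K" "x \<ge> K1" "x \<ge> 1" by (auto simp: K2_def)
  have "0 \<le> e * x" using e xK by simp
  then have "x \<le> (1 + e) * x" by (simp add: algebra_simps)
  then have yK1: "y \<ge> K1" using xK(2) unfolding yx by (rule order_trans[rotated])
  have hx: "h x \<ge> 1" "h x \<ge> - ln c / e" using K1[OF xK(2)] by auto
  have hy: "h y \<ge> 1" using K1[OF yK1] by auto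
  have "e * (- ln c / e) \<le> e * h x" using hx(2) by (rule mult_left_mono) (use e in simp)
  then have lnc2: "- ln c \<le> e * h x" using e by simp
  have R1: "tail_exponent M S x \<le> - ln c + tail_exponent M Y y"
  proof (rule pS_ge[OF _ c(1)])
    have "0 \<le> x" using xK by simp
    from c(3)[OF this] show "c * prob {\<omega> \<in> space M. Y \<omega> > y} \<le> prob {\<omega> \<in> space M. S \<omega> > x}"
      unfolding yx .
  qed
  have Q1: "tail_exponent M Y y < (1 + e) * h y" using y(2) hy by (simp add: divide_less_eq)
  have h2: "h y \<le> (1 + e) * h x" unfolding yx by (rule hc2) (use e xK in auto)
  have Q2: "(1 + e) * h y \<le> (1 + e) * ((1 + e) * h x)" using h2 by (rule mult_left_mono) (use e in simp)
  have "tail_exponent M S x < e * h x + (1 + e) * ((1 + e) * h x)" by (rule lin3[OF R1 lnc2 Q1 Q2])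
  also have "\<dots> = (e + (1 + e) * (1 + e)) * h x" by (simp add: algebra_simps)
  also have "\<dots> \<le> (1 + \<epsilon>) * h x"
  proof (rule mult_right_mono)
    have "e * e \<le> e" using e by (simp add: mult_le_cancel_left1)
    then show "e + (1 + e) * (1 + e) \<le> 1 + \<epsilon>" using e(3) by (simp add: algebra_simps)
  qed (use hx in simp)
  finally have "tail_exponent M S x / h x < 1 + \<epsilon>" using hx by (simp add: divide_less_eq)
  then show ?thesis using xK by blast
qed

lemma ln_small:
  assumes c: "c > 0"
  shows "eventually (\<lambda>x. ln (x / mu) \<le> c / 2 * x) at_top"
proof -
  define K where "K = max 1 (4 / c * (ln (4 / (c * mu)) + 1))"
  have "ln (x / mu) \<le> c / 2 * x" if x: "x \<ge> K" for x
  proof -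
    have x0: "x > 0" using x by (simp add: K_def)
    have a: "c * x / 4 > 0" "4 / (c * mu) > 0" using c x0 mu_pos' by auto
    have eq: "x / mu = (c * x / 4) * (4 / (c * mu))" using c mu_pos' by (simp add: field_simps)
    have "ln (x / mu) = ln ((c * x / 4) * (4 / (c * mu)))" by (simp only: eq)
    also have "\<dots> = ln (c * x / 4) + ln (4 / (c * mu))" by (rule ln_mult_pos[OF a(1) a(2)])
    finally have l1: "ln (x / mu) = ln (c * x / 4) + ln (4 / (c * mu))" .
    have l2: "ln (c * x / 4) \<le> c * x / 4 - 1" using a by (intro ln_le_minus_one)
    have "4 / c * (ln (4 / (c * mu)) + 1) \<le> x" using x by (simp add: K_def)
    then have l3: "ln (4 / (c * mu)) + 1 \<le> c * x / 4" using c by (simp add: field_simps)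
    have l4: "c / 2 * x = 2 * (c * x / 4)" by simp
    show ?thesis unfolding l4 using l1 l2 l3 by argo
  qed
  then show ?thesis unfolding eventually_at_top_linorder by blast
qed

lemma R_lower:
  assumes eps: "\<epsilon> > 0"
  shows "eventually (\<lambda>x. tail_exponent M S x / h x > 1 - \<epsilon>) at_top"
proof -
  define e where "e = min (1/2) (\<epsilon> / 4)"
  have e: "0 < e" "e \<le> 1/2" "e \<le> \<epsilon> / 4" using eps by (auto simp: e_def)
  obtain c where c: "0 < c"
    "\<And>x. x \<ge> 0 \<Longrightarrow> prob {\<omega> \<in> space M. S \<omega> > x} \<le>
        prob {\<omega> \<in> space M. Y \<omega> > (1 - e) * x} + x / mu * exp (- c * x)"
    using S_upper[of e] e by auto
  obtain c' where c': "0 < c'"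
    "\<And>x. x \<ge> 0 \<Longrightarrow> prob {\<omega> \<in> space M. S \<omega> > x} \<ge> c' * prob {\<omega> \<in> space M. Y \<omega> > (1 + 1) * x}"
    using S_lower[of 1] by auto
  obtain K1 where K1: "\<And>x. x \<ge> K1 \<Longrightarrow> h x \<ge> max 1 (ln 2 / e)"
    using h_ev[of "max 1 (ln 2 / e)"] unfolding eventually_at_top_linorder by auto
  obtain K2 where K2: "\<And>y. y \<ge> K2 \<Longrightarrow> tail_exponent M Y y / h y > 1 - e"
    using liminf_lower[OF g_lim e(1)] unfolding eventually_at_top_linorder by auto
  obtain K3 where K3: "\<And>x. x \<ge> K3 \<Longrightarrow> h x \<le> c / 2 * x"
    using h_small[of "c / 2"] c unfolding eventually_at_top_linorder by auto
  obtain K4 where K4: "\<And>x. x \<ge> K4 \<Longrightarrow> ln (x / mu) \<le> c / 2 * x"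
    using ln_small[OF c(1)] unfolding eventually_at_top_linorder by auto
  define K where "K = max (max (max K1 K3) (max K4 1)) (2 * max K1 K2)"
  have "tail_exponent M S x / h x > 1 - \<epsilon>" if x: "x \<ge> K" for x
  proof -
    have xs: "x \<ge> K1" "x \<ge> K3" "x \<ge> K4" "x \<ge> 1" "x \<ge> 2 * max K1 K2" using x by (auto simp: K_def)
    define y where "y = (1 - e) * x"
    have "e * x \<le> 1/2 * x" by (rule mult_right_mono) (use e xs(4) in auto)
    then have "x / 2 \<le> y" unfolding y_def by (simp add: algebra_simps)
    then have ys: "y \<ge> K1" "y \<ge> K2" using xs(5) by auto
    have hx: "h x \<ge> 1" "h x \<ge> ln 2 / e" using K1[OF xs(1)] by auto
    have hy: "h y \<ge> 1" using K1[OF ys(1)] by auto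
    define m where "m = (1 - e) * ((1 - e) * h x)"
    have gy: "tail_exponent M Y y > (1 - e) * h y" using K2[OF ys(2)] hy by (simp add: less_divide_eq)
    have hyx: "(1 - e) * h x \<le> h y" unfolding y_def by (rule hc1) (use e xs in auto)
    have "(1 - e) * ((1 - e) * h x) \<le> (1 - e) * h y" using hyx by (rule mult_left_mono) (use e in simp)
    then have QA: "tail_exponent M Y y > m" using gy unfolding m_def by argo
    have A: "prob {\<omega> \<in> space M. Y \<omega> > y} \<le> exp (- m)" using Q_bound[OF QA] by simp
    have m_le: "m \<le> h x"
    proof -
      have "(1 - e) * h x \<le> h x" using e hx by (simp add: mult_le_cancel_right1)
      moreover have "(1 - e) * ((1 - e) * h x) \<le> (1 - e) * h x"
        using e hx by (simp add: mult_le_cancel_left1)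
      ultimately show ?thesis unfolding m_def by argo
    qed
    have x0: "x > 0" using xs by simp
    have "x / mu * exp (- c * x) = exp (ln (x / mu)) * exp (- c * x)" using x0 mu_pos' by simp
    also have "\<dots> = exp (ln (x / mu) - c * x)" by (simp add: exp_add[symmetric])
    also have "\<dots> \<le> exp (- m)"
    proof -
      have "ln (x / mu) \<le> c / 2 * x" by (rule K4[OF xs(3)])
      moreover have "h x \<le> c / 2 * x" by (rule K3[OF xs(2)])
      ultimately have "ln (x / mu) - c * x \<le> - m" using m_le by argo
      then show ?thesis by simp
    qed
    finally have B: "x / mu * exp (- c * x) \<le> exp (- m)" .
    have pS: "prob {\<omega> \<in> space M. S \<omega> > x} \<le> 2 * exp (- m)"
      using c(2)[of x] x0 A B unfolding y_def by simp
    have pS0: "prob {\<omega> \<in> space M. S \<omega> > x} > 0"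
    proof -
      have "c' * prob {\<omega> \<in> space M. Y \<omega> > (1 + 1) * x} > 0" using c'(1) pY_pos by simp
      then show ?thesis using c'(2)[of x] x0 by simp
    qed
    have "ln (prob {\<omega> \<in> space M. S \<omega> > x}) \<le> ln (2 * exp (- m))" using pS pS0 by simp
    also have "ln (2 * exp (- m)) = ln 2 - m" by (simp add: ln_mult_pos)
    finally have R1: "tail_exponent M S x \<ge> m - ln 2" unfolding tail_exponent_def by argo
    have ln2: "ln 2 \<le> e * h x" using hx(2) e(1) by (simp add: divide_le_eq mult.commute)
    have "m - e * h x = (1 - 3 * e + e * e) * h x" unfolding m_def by (simp add: algebra_simps)
    also have "\<dots> > (1 - \<epsilon>) * h x"
    proof (rule mult_strict_right_mono)
      have "0 \<le> e * e" by simp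
      then show "1 - \<epsilon> < 1 - 3 * e + e * e" using e eps by argo
    qed (use hx in simp)
    finally have "tail_exponent M S x > (1 - \<epsilon>) * h x" using R1 ln2 by argo
    then show ?thesis using hx by (simp add: less_divide_eq)
  qed
  then show ?thesis unfolding eventually_at_top_linorder by blast
qed

lemma R_liminf: "Liminf at_top (\<lambda>x. ereal (tail_exponent M S x / h x)) = 1"
  by (rule liminf_intro[OF R_lower R_upper])

lemma pS_pos: assumes "x \<ge> 0" shows "prob {\<omega> \<in> space M. S \<omega> > x} > 0"
proof -
  obtain c' where c': "0 < c'"
    "\<And>x. x \<ge> 0 \<Longrightarrow> prob {\<omega> \<in> space M. S \<omega> > x} \<ge> c' * prob {\<omega> \<in> space M. Y \<omega> > (1 + 1) * x}"
    using S_lower[of 1] by auto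
  have "c' * prob {\<omega> \<in> space M. Y \<omega> > (1 + 1) * x} > 0" using c'(1) pY_pos by simp
  then show ?thesis using c'(2)[OF assms] by simp
qed

lemma S_heavy: "heavy_tailed M S"
  unfolding heavy_tailed_def
proof (intro allI impI, rule ccontr)
  fix s :: real assume s: "s > 0"
  assume ne: "(\<integral>\<^sup>+ \<omega>. ennreal (exp (s * S \<omega>)) \<partial>M) \<noteq> \<infinity>"
  obtain C where C: "(\<integral>\<^sup>+ \<omega>. ennreal (exp (s * S \<omega>)) \<partial>M) = ennreal C" "C \<ge> 0"
    using ne by (cases "(\<integral>\<^sup>+ \<omega>. ennreal (exp (s * S \<omega>)) \<partial>M)" rule: ennreal_cases) auto
  have markov: "prob {\<omega> \<in> space M. S \<omega> > x} \<le> exp (- s * x) * C" for x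
  proof -
    define E where "E = {\<omega> \<in> space M. S \<omega> > x}"
    have E_sets: "E \<in> events" unfolding E_def by measurable
    have "emeasure M E = (\<integral>\<^sup>+\<omega>. indicator E \<omega> \<partial>M)" using E_sets by simp
    also have "\<dots> \<le> (\<integral>\<^sup>+\<omega>. ennreal (exp (- s * x)) * ennreal (exp (s * S \<omega>)) \<partial>M)"
    proof (rule nn_integral_mono)
      fix \<omega> assume w: "\<omega> \<in> space M"
      have e: "ennreal (exp (- s * x)) * ennreal (exp (s * S \<omega>)) = ennreal (exp (s * (S \<omega> - x)))"
        by (simp add: ennreal_mult[symmetric] exp_add[symmetric] algebra_simps)
      have "indicator E \<omega> \<le> ennreal (exp (s * (S \<omega> - x)))"
      proof (cases "\<omega> \<in> E")
        case True
        then have "0 \<le> s * (S \<omega> - x)" using s by (auto simp: E_def)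
        then have "1 \<le> exp (s * (S \<omega> - x))" by simp
        then show ?thesis using True by simp
      qed simp
      then show "indicator E \<omega> \<le> ennreal (exp (- s * x)) * ennreal (exp (s * S \<omega>))" unfolding e .
    qed
    also have "\<dots> = ennreal (exp (- s * x)) * (\<integral>\<^sup>+\<omega>. ennreal (exp (s * S \<omega>)) \<partial>M)"
      by (rule nn_integral_cmult) measurable
    also have "\<dots> = ennreal (exp (- s * x) * C)" unfolding C(1) using C(2) by (simp add: ennreal_mult)
    finally have "emeasure M E \<le> ennreal (exp (- s * x) * C)" .
    then show ?thesis using C(2) unfolding E_def[symmetric] by (simp add: emeasure_eq_measure)
  qed
  have C0: "C > 0"
  proof (rule ccontr)
    assume "\<not> C > 0"
    then have "C = 0" using C(2) by simp
    then have "prob {\<omega> \<in> space M. S \<omega> > 0} \<le> 0" using markov[of 0] by simp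
    then show False using pS_pos[of 0] by simp
  qed
  obtain K1 where K1: "\<And>x. x \<ge> K1 \<Longrightarrow> h x \<le> s / 4 * x"
    using h_small[of "s / 4"] s unfolding eventually_at_top_linorder by auto
  obtain K2 where K2: "\<And>x. x \<ge> K2 \<Longrightarrow> h x \<ge> 1"
    using h_ev[of 1] unfolding eventually_at_top_linorder by auto
  obtain x where x: "x \<ge> max (max K1 K2) (max 0 (4 / s * ln C))" "tail_exponent M S x / h x < 1 + 1/2"
    using R_upper[of "1/2" "max (max K1 K2) (max 0 (4 / s * ln C))"] by auto
  have xs: "x \<ge> K1" "x \<ge> K2" "x \<ge> 0" "x \<ge> 4 / s * ln C" using x(1) by auto
  have hx: "h x \<ge> 1" "h x \<le> s / 4 * x" using K1[OF xs(1)] K2[OF xs(2)] by auto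
  have lnC: "ln C \<le> s / 4 * x" using xs(4) s by (simp add: divide_le_eq field_simps)
  have p0: "prob {\<omega> \<in> space M. S \<omega> > x} > 0" by (rule pS_pos[OF xs(3)])
  have "ln (prob {\<omega> \<in> space M. S \<omega> > x}) \<le> ln (exp (- s * x) * C)"
    using markov[of x] p0 by simp
  also have "\<dots> = - s * x + ln C" using C0 by (simp add: ln_mult_pos)
  finally have R1: "tail_exponent M S x \<ge> s * x - ln C" unfolding tail_exponent_def by argo
  have sx: "s * x = 4 * (s / 4 * x)" by simp
  have "tail_exponent M S x \<ge> 3 * h x" using R1 lnC hx(2) unfolding sx by argo
  then have "tail_exponent M S x / h x \<ge> 3" using hx(1) by (simp add: le_divide_eq)
  then show False using x(2) by argo
qed

end

theorem mainTheorem11: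
  fixes M :: "'a measure" and X :: "'a \<Rightarrow> real" and Xs :: "nat \<Rightarrow> 'a \<Rightarrow> real"
    and N :: "'a \<Rightarrow> nat" and \<delta> :: real and h :: "real \<Rightarrow> real"
  assumes "prob_space M"
    and "X \<in> borel_measurable M"
    and "light_tailed M X"
    and "integrable M X" and "prob_space.expectation M X > 0"
    and "\<And>i. i \<ge> 1 \<Longrightarrow> Xs i \<in> borel_measurable M"
    and "\<And>i. i \<ge> 1 \<Longrightarrow> distr M borel (Xs i) = distr M borel X"
    and "prob_space.indep_vars M (\<lambda>_. borel) Xs {1..}"
    and "N \<in> measurable M (count_space UNIV)"
    and "\<And>\<omega>. \<omega> \<in> space M \<Longrightarrow> N \<omega> \<ge> 1"
    and "heavy_tailed M (\<lambda>\<omega>. real (N \<omega>))"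
    and "prob_space.indep_set M
           (sigma_sets (space M) {N -` A \<inter> space M | A. A \<in> sets (count_space UNIV)})
           (sigma_sets (space M) (\<Union>i\<in>{1..}. {Xs i -` A \<inter> space M | A. A \<in> sets borel}))"
    and "\<delta> > 0"
    and "(\<integral>\<^sup>+ \<omega>. ennreal (real (N \<omega>) powr (1 + \<delta>)) \<partial>M) < \<infinity>"
    and "natural_scale M (\<lambda>\<omega>. prob_space.expectation M X * real (N \<omega>)) h"
    and "\<forall>\<^sub>F x in at_top. h x \<ge> (1 + \<delta>) * ln x"
  shows "natural_scale M (\<lambda>\<omega>. \<Sum>k\<in>{1..N \<omega>}. Xs k \<omega>) h"
proof -
  interpret prob_space M by (fact assms(1))
  interpret thm_setting M X Xs N \<delta> h
    by unfold_locales (fact assms)+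
  have eqS: "(\<lambda>\<omega>. \<Sum>k\<in>{1..N \<omega>}. Xs k \<omega>) = S" by (simp add: S_def fun_eq_iff)
  show ?thesis unfolding eqS natural_scale_def
    using S_heavy h_concave h0 h_nonneg h_lim R_liminf by blast
qed

end
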